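(* Let $N,n,q\ge1$ and let $A\in\mathbb{R}^{n\times n}$, $B_v\in\mathbb{R}^{n\times q}$, $G\in\mathbb{R}^{q\times n}$, $B_u\in\mathbb{R}^{n\times1}$, $C\in\mathbb{R}^{1\times n}$. Let $M_0,\dots,M_{q-1}\in\mathbb{R}^{N\times N}$ be simultaneously diagonalized by an invertible $T$, i.e. $T^{-1}M_iT=\Lambda_i=\mathrm{diag}(\lambda_0(M_i),\dots,\lambda_{N-1}(M_i))$ for each $i$. For $i=0,\dots,q-1$ let $\Delta_i\in\mathbb{R}^{q\times q}$ be the matrix with $(i,i)$ entry $1$ and all other entries $0$, and let $M=\sum_{i=0}^{q-1}M_i\otimes\Delta_i\in\mathbb{R}^{Nq\times Nq}$. Then $(T\otimes I_q)^{-1}M(T\otimes I_q)=\sum_{i=0}^{q-1}\Lambda_i\otimes\Delta_i$ is diagonal. Moreover, consider the linear system $$\dot{\tilde x}=\big[(I_N\otimes A)+(I_N\otimes B_v)M(I_N\otimes G)\big]\tilde x+(I_N\otimes B_u)\tilde u,\qquad \tilde y=(I_N\otimes C)\tilde x,$$ with constant input $\tilde u\in\mathbb{R}^N$, and assume $A+\sum_{i=0}^{q-1}\lambda_k(M_i)B_v\Delta_iG$ is invertible for every $k$. Then the steady-state readout $\tilde y^*$ satisfies $T^{-1}\tilde y^*=S\,T^{-1}\tilde u$ where $S$ is diagonal with entries $$[S]_{kk}=-C\Big(A+\sum_{i=0}^{q-1}\lambda_k(M_i)B_v\Delta_iG\Big)^{-1}B_u,\qquad k=0,\dots,N-1.$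$
   Context: $\otimes$ denotes the Kronecker product, $I_m$ the $m\times m$ identity. This describes $N$ identical cells, each with $q$ coupling signals, where signal $i$ is transmitted between cells according to interconnection matrix $M_i$ (the system linearized about a homogeneous steady state). *)

theory Defs
  imports "Jordan_Normal_Form.Matrix"
begin

text \<open>Kronecker product of matrices (row index of A \<otimes> B is i * dim_row B + k).\<close>
definition kron :: "'a::times mat \<Rightarrow> 'a mat \<Rightarrow> 'a mat" where
  "kron A B = mat (dim_row A * dim_row B) (dim_col A * dim_col B)
     (\<lambda>(r, c). A $$ (r div dim_row B, c div dim_col B) * B $$ (r mod dim_row B, c mod dim_col B))"

definition matsum :: "nat \<Rightarrow> nat \<Rightarrow> nat \<Rightarrow> (nat \<Rightarrow> 'a::comm_monoid_add mat) \<Rightarrow> 'a mat" where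
  "matsum nr nc k f = mat nr nc (\<lambda>ij. \<Sum>i<k. f i $$ ij)"

definition mat_inv :: "'a::semiring_1 mat \<Rightarrow> 'a mat" where
  "mat_inv A = (SOME B. inverts_mat A B \<and> inverts_mat B A)"

definition Delta :: "nat \<Rightarrow> nat \<Rightarrow> 'a::{zero,one} mat" where
  "Delta q i = mat q q (\<lambda>(a, b). if a = i \<and> b = i then 1 else 0)"

definition diag_mat :: "nat \<Rightarrow> (nat \<Rightarrow> 'a::zero) \<Rightarrow> 'a mat" where
  "diag_mat N d = mat N N (\<lambda>(a, b). if a = b then d a else 0)"

end

theory Submission imports Defs begin

lemma sum_split_nat: "(\<Sum>j<m*n. f j) = (\<Sum>a<m. \<Sum>b<n. f (a*n+b :: nat))"
proof (induction m)
  case 0 then show ?case by simp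
next
  case (Suc m)
  have e: "Suc m * n = m*n + n" by simp
  have "(\<Sum>j<Suc m*n. f j) = (\<Sum>j\<in>{0..<m*n}. f j) + (\<Sum>j\<in>{m*n..<m*n+n}. f j)"
    unfolding e lessThan_atLeast0 by (rule sum.atLeastLessThan_concat[symmetric]) auto
  also have "(\<Sum>j\<in>{m*n..<m*n+n}. f j) = (\<Sum>j\<in>{0+m*n..<n+m*n}. f j)" by (simp add: add.commute)
  also have "\<dots> = (\<Sum>b\<in>{0..<n}. f (b + m*n))" by (rule sum.shift_bounds_nat_ivl)
  finally show ?case using Suc by (simp add: lessThan_atLeast0 add.commute)
qed
lemma sum_split_divmod:
  assumes "(n::nat) > 0"
  shows "(\<Sum>j<m*n. g (j div n) (j mod n)) = (\<Sum>a<m. \<Sum>b<n. g a b)"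
  by (subst sum_split_nat) (use assms in \<open>intro sum.cong refl, auto\<close>)

lemma dim_kron[simp]: "dim_row (kron A B) = dim_row A * dim_row B" "dim_col (kron A B) = dim_col A * dim_col B"
  by (auto simp: kron_def)

lemma kron_carrier: "A \<in> carrier_mat a1 a2 \<Longrightarrow> B \<in> carrier_mat b1 b2 \<Longrightarrow> kron A B \<in> carrier_mat (a1*b1) (a2*b2)"
  unfolding carrier_mat_def by simp
lemma index_kron[simp]: "i < dim_row A * dim_row B \<Longrightarrow> j < dim_col A * dim_col B \<Longrightarrow>
   kron A B $$ (i,j) = A $$ (i div dim_row B, j div dim_col B) * B $$ (i mod dim_row B, j mod dim_col B)"
  unfolding kron_def by simp

lemma divmod_bounds: "(i::nat) < a * b \<Longrightarrow> i div b < a \<and> i mod b < b"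
  by (cases "b = 0") (auto simp: less_mult_imp_div_less)
lemma kron_mult:
  fixes A B C D :: "'a::comm_semiring_1 mat"
  assumes A: "A \<in> carrier_mat a1 a2" and B: "B \<in> carrier_mat b1 b2" and C: "C \<in> carrier_mat a2 a3"
    and D: "D \<in> carrier_mat b2 b3" and pos: "b2 > 0"
  shows "kron A B * kron C D = kron (A*C) (B*D)"
proof (rule eq_matI)
  fix i j assume i: "i < dim_row (kron (A*C) (B*D))" and j: "j < dim_col (kron (A*C) (B*D))"
  then have i: "i < a1*b1" and j: "j < a3*b3" using A B C D by auto
  have id: "i div b1 < a1" "j div b3 < a3" "i mod b1 < b1" "j mod b3 < b3" using i j divmod_bounds by auto
  have "(kron A B * kron C D) $$ (i,j) = (\<Sum>k<a2*b2. kron A B $$ (i,k) * kron C D $$ (k,j))"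
    using i j A B C D by (simp add: scalar_prod_def lessThan_atLeast0)
  also have "\<dots> = (\<Sum>k<a2*b2. (A $$ (i div b1, k div b2) * C $$ (k div b2, j div b3)) *
        (B $$ (i mod b1, k mod b2) * D $$ (k mod b2, j mod b3)))"
    using i j A B C D by (intro sum.cong refl) (auto simp: ac_simps)
  also have "\<dots> = (\<Sum>x<a2. \<Sum>y<b2. (A $$ (i div b1, x) * C $$ (x, j div b3)) *
        (B $$ (i mod b1, y) * D $$ (y, j mod b3)))"
    by (rule sum_split_divmod[OF pos])
  also have "\<dots> = (\<Sum>x<a2. A $$ (i div b1, x) * C $$ (x, j div b3)) * (\<Sum>y<b2. B $$ (i mod b1, y) * D $$ (y, j mod b3))"
    by (simp add: sum_product)
  also have "\<dots> = kron (A*C) (B*D) $$ (i,j)"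
    using i j id A B C D by (simp add: scalar_prod_def lessThan_atLeast0)
  finally show "(kron A B * kron C D) $$ (i,j) = kron (A*C) (B*D) $$ (i,j)" .
qed (use A B C D in auto)

lemma kron_one: "b > 0 \<Longrightarrow> kron (1\<^sub>m a) (1\<^sub>m b :: 'a::semiring_1 mat) = 1\<^sub>m (a*b)"
proof (rule eq_matI)
  fix i j assume b: "b > 0" and i: "i < dim_row (1\<^sub>m (a*b) :: 'a mat)" and j: "j < dim_col (1\<^sub>m (a*b) :: 'a mat)"
  have "(i = j) = (i div b = j div b \<and> i mod b = j mod b)"
    by (metis div_mult_mod_eq)
  then show "kron (1\<^sub>m a) (1\<^sub>m b) $$ (i, j) = (1\<^sub>m (a*b) :: 'a mat) $$ (i, j)"
    using i j divmod_bounds[of i a b] divmod_bounds[of j a b] by auto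
qed auto

lemma kron_one1: "kron X (1\<^sub>m 1 :: 'a::semiring_1 mat) = X"
  by (rule eq_matI) auto

definition bdiag :: "nat \<Rightarrow> nat \<Rightarrow> nat \<Rightarrow> (nat \<Rightarrow> 'a::semiring_1 mat) \<Rightarrow> 'a mat" where
  "bdiag N r c f = mat (N*r) (N*c) (\<lambda>(i,j). if i div r = j div c then f (i div r) $$ (i mod r, j mod c) else 0)"

lemma bdiag_carrier[simp]: "bdiag N r c f \<in> carrier_mat (N*r) (N*c)"
  by (auto simp: bdiag_def)

lemma dim_bdiag[simp]: "dim_row (bdiag N r c f) = N*r" "dim_col (bdiag N r c f) = N*c"
  by (auto simp: bdiag_def)

lemma index_bdiag: "i < N*r \<Longrightarrow> j < N*c \<Longrightarrow> bdiag N r c f $$ (i,j) =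
   (if i div r = j div c then f (i div r) $$ (i mod r, j mod c) else 0)"
  by (auto simp: bdiag_def)

lemma bdiag_cong: "(\<And>k. k < N \<Longrightarrow> f k = g k) \<Longrightarrow> bdiag N r c f = bdiag N r c g"
  by (rule eq_matI) (auto simp: index_bdiag dest: divmod_bounds)

lemma bdiag_mult:
  fixes f g :: "nat \<Rightarrow> 'a::comm_semiring_1 mat"
  assumes f: "\<And>k. k < N \<Longrightarrow> f k \<in> carrier_mat r m" and g: "\<And>k. k < N \<Longrightarrow> g k \<in> carrier_mat m c"
    and pos: "m > 0"
  shows "bdiag N r m f * bdiag N m c g = bdiag N r c (\<lambda>k. f k * g k)"
proof (rule eq_matI)
  fix i j assume i: "i < dim_row (bdiag N r c (\<lambda>k. f k * g k))" and j: "j < dim_col (bdiag N r c (\<lambda>k. f k * g k))"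
  then have i: "i < N*r" and j: "j < N*c" by auto
  have bd: "i div r < N" "j div c < N" "i mod r < r" "j mod c < c" using i j divmod_bounds by auto
  have "(bdiag N r m f * bdiag N m c g) $$ (i,j) = (\<Sum>k<N*m. bdiag N r m f $$ (i,k) * bdiag N m c g $$ (k,j))"
    using i j by (simp add: scalar_prod_def lessThan_atLeast0)
  also have "\<dots> = (\<Sum>k<N*m. (\<lambda>a b. if a = i div r then (if a = j div c then f a $$ (i mod r, b) * g a $$ (b, j mod c) else 0) else 0) (k div m) (k mod m))"
    using i j by (intro sum.cong refl) (auto simp: index_bdiag)
  also have "\<dots> = (\<Sum>a<N. \<Sum>b<m. (if a = i div r then (if a = j div c then f a $$ (i mod r, b) * g a $$ (b, j mod c) else 0) else 0))"
    by (rule sum_split_divmod[OF pos])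
  also have "\<dots> = (\<Sum>a<N. if a = i div r then (\<Sum>b<m. (if a = j div c then f a $$ (i mod r, b) * g a $$ (b, j mod c) else 0)) else 0)"
    by (intro sum.cong refl) auto
  also have "\<dots> = (\<Sum>b<m. (if i div r = j div c then f (i div r) $$ (i mod r, b) * g (i div r) $$ (b, j mod c) else 0))"
    by (subst sum.delta, simp, simp only: lessThan_iff bd(1) if_True)
  also have "\<dots> = bdiag N r c (\<lambda>k. f k * g k) $$ (i,j)"
    using i j bd f[OF bd(1)] g[OF bd(1)] by (auto simp: index_bdiag scalar_prod_def lessThan_atLeast0)
  finally show "(bdiag N r m f * bdiag N m c g) $$ (i,j) = bdiag N r c (\<lambda>k. f k * g k) $$ (i,j)" .
qed auto

lemma kron_one_bdiag:
  assumes X: "X \<in> carrier_mat r c" and pos: "r > 0" "c > 0"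
  shows "kron (1\<^sub>m N) X = bdiag N r c (\<lambda>_. X)"
proof (rule eq_matI)
  fix i j assume i: "i < dim_row (bdiag N r c (\<lambda>_. X))" and j: "j < dim_col (bdiag N r c (\<lambda>_. X))"
  then have i: "i < N*r" and j: "j < N*c" by auto
  have bd: "i div r < N" "j div c < N" "i mod r < r" "j mod c < c" using i j divmod_bounds by auto
  show "kron (1\<^sub>m N) X $$ (i,j) = bdiag N r c (\<lambda>_. X) $$ (i,j)"
    using i j bd X by (simp add: index_bdiag)
qed (use X in auto)

lemma bdiag_one: "m > 0 \<Longrightarrow> bdiag N m m (\<lambda>_. 1\<^sub>m m) = (1\<^sub>m (N*m) :: 'a::semiring_1 mat)"
proof -
  assume m: "m > 0"
  have H: "kron (1\<^sub>m N) (1\<^sub>m m :: 'a mat) = bdiag N m m (\<lambda>_. 1\<^sub>m m)" by (rule kron_one_bdiag) (use m in auto)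
  show ?thesis using H kron_one[OF m, of N] by metis
qed
lemma matsum_carrier[simp]: "matsum nr nc k f \<in> carrier_mat nr nc"
  by (simp add: matsum_def)

lemma dim_matsum[simp]: "dim_row (matsum nr nc k f) = nr" "dim_col (matsum nr nc k f) = nc"
  by (simp_all add: matsum_def)

lemma index_matsum: "i < nr \<Longrightarrow> j < nc \<Longrightarrow> matsum nr nc k f $$ (i,j) = (\<Sum>s<k. f s $$ (i,j))"
  by (simp add: matsum_def)

lemma matsum_cong: "(\<And>s. s < k \<Longrightarrow> f s = g s) \<Longrightarrow> matsum nr nc k f = matsum nr nc k g"
  by (rule eq_matI) (simp_all add: index_matsum)

lemma mult_matsum_left:
  fixes X :: "'a::comm_semiring_1 mat"
  assumes X: "X \<in> carrier_mat a nr" and f: "\<And>s. s < k \<Longrightarrow> f s \<in> carrier_mat nr nc"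
  shows "X * matsum nr nc k f = matsum a nc k (\<lambda>s. X * f s)"
proof (rule eq_matI)
  fix i j assume i: "i < dim_row (matsum a nc k (\<lambda>s. X * f s))" and j: "j < dim_col (matsum a nc k (\<lambda>s. X * f s))"
  then have i: "i < a" and j: "j < nc" by auto
  have "(X * matsum nr nc k f) $$ (i,j) = (\<Sum>l<nr. X $$ (i,l) * (\<Sum>s<k. f s $$ (l,j)))"
    using i j X by (simp add: scalar_prod_def lessThan_atLeast0 index_matsum)
  also have "\<dots> = (\<Sum>s<k. \<Sum>l<nr. X $$ (i,l) * f s $$ (l,j))"
    by (simp add: sum_distrib_left sum.swap[of _ "{..<k}"])
  also have "\<dots> = matsum a nc k (\<lambda>s. X * f s) $$ (i,j)"
    unfolding index_matsum[OF i j]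
  proof (intro sum.cong refl)
    fix s assume "s \<in> {..<k}"
    then have fs: "f s \<in> carrier_mat nr nc" using f by auto
    show "(\<Sum>l<nr. X $$ (i,l) * f s $$ (l,j)) = (X * f s) $$ (i,j)"
      using i j X fs by (simp add: scalar_prod_def lessThan_atLeast0)
  qed
  finally show "(X * matsum nr nc k f) $$ (i,j) = matsum a nc k (\<lambda>s. X * f s) $$ (i,j)" .
qed (use X in auto)

lemma matsum_mult_right:
  fixes X :: "'a::comm_semiring_1 mat"
  assumes X: "X \<in> carrier_mat nc b" and f: "\<And>s. s < k \<Longrightarrow> f s \<in> carrier_mat nr nc"
  shows "matsum nr nc k f * X = matsum nr b k (\<lambda>s. f s * X)"
proof (rule eq_matI)
  fix i j assume i: "i < dim_row (matsum nr b k (\<lambda>s. f s * X))" and j: "j < dim_col (matsum nr b k (\<lambda>s. f s * X))"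
  then have i: "i < nr" and j: "j < b" by auto
  have "(matsum nr nc k f * X) $$ (i,j) = (\<Sum>l<nc. (\<Sum>s<k. f s $$ (i,l)) * X $$ (l,j))"
    using i j X by (simp add: scalar_prod_def lessThan_atLeast0 index_matsum)
  also have "\<dots> = (\<Sum>s<k. \<Sum>l<nc. f s $$ (i,l) * X $$ (l,j))"
    by (simp add: sum_distrib_right sum.swap[of _ "{..<k}"])
  also have "\<dots> = matsum nr b k (\<lambda>s. f s * X) $$ (i,j)"
    unfolding index_matsum[OF i j]
  proof (intro sum.cong refl)
    fix s assume "s \<in> {..<k}"
    then have fs: "f s \<in> carrier_mat nr nc" using f by auto
    show "(\<Sum>l<nc. f s $$ (i,l) * X $$ (l,j)) = (f s * X) $$ (i,j)"
      using i j X fs by (simp add: scalar_prod_def lessThan_atLeast0)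
  qed
  finally show "(matsum nr nc k f * X) $$ (i,j) = matsum nr b k (\<lambda>s. f s * X) $$ (i,j)" .
qed (use X in auto)

lemma mat_inv_eq:
  fixes X Y :: "'a::semiring_1 mat"
  assumes X: "X \<in> carrier_mat n n" and Y: "Y \<in> carrier_mat n n" and XY: "X * Y = 1\<^sub>m n" and YX: "Y * X = 1\<^sub>m n"
  shows "mat_inv X = Y"
proof -
  have ex: "\<exists>B. inverts_mat X B \<and> inverts_mat B X" using X Y XY YX by (auto simp: inverts_mat_def)
  let ?B = "mat_inv X"
  have B: "inverts_mat X ?B \<and> inverts_mat ?B X" unfolding mat_inv_def by (rule someI_ex[OF ex])
  then have XB: "X * ?B = 1\<^sub>m n" and BX: "?B * X = 1\<^sub>m (dim_row ?B)" using X by (auto simp: inverts_mat_def)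
  have "dim_col (X * ?B) = dim_col (1\<^sub>m n :: 'a mat)" using XB by simp
  then have c: "dim_col ?B = n" by simp
  have "dim_col (?B * X) = dim_col (1\<^sub>m (dim_row ?B) :: 'a mat)" using BX by simp
  then have r: "dim_row ?B = n" using X by simp
  have Bc: "?B \<in> carrier_mat n n" using c r by auto
  have "?B = ?B * (X * Y)" using XY Bc by simp
  also have "\<dots> = (?B * X) * Y" using X Y Bc by (simp add: assoc_mult_mat)
  also have "\<dots> = Y" using BX r Y by simp
  finally show ?thesis .
qed

lemma mat_inv_props:
  fixes X :: "'a::semiring_1 mat"
  assumes X: "X \<in> carrier_mat n n" and inv: "invertible_mat X"
  shows "mat_inv X \<in> carrier_mat n n" "X * mat_inv X = 1\<^sub>m n" "mat_inv X * X = 1\<^sub>m n"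
proof -
  obtain B where XB: "X * B = 1\<^sub>m n" and BX: "B * X = 1\<^sub>m (dim_row B)"
    using inv X unfolding invertible_mat_def inverts_mat_def by auto
  have "dim_col (X * B) = dim_col (1\<^sub>m n :: 'a mat)" using XB by simp
  then have c: "dim_col B = n" by simp
  have "dim_col (B * X) = dim_col (1\<^sub>m (dim_row B) :: 'a mat)" using BX by simp
  then have r: "dim_row B = n" using X by simp
  have Bc: "B \<in> carrier_mat n n" using c r by auto
  have e: "mat_inv X = B" using mat_inv_eq[OF X Bc XB] BX r by simp
  show "mat_inv X \<in> carrier_mat n n" "X * mat_inv X = 1\<^sub>m n" "mat_inv X * X = 1\<^sub>m n"
    using e Bc XB BX r by auto
qed
lemma mult_uminus_vec_right:
  fixes A :: "'a::comm_ring_1 mat"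
  assumes "A \<in> carrier_mat nr nc" "v \<in> carrier_vec nc"
  shows "A *\<^sub>v (- v) = - (A *\<^sub>v v)"
  using assms by (intro eq_vecI) (auto simp: scalar_prod_uminus_right)

lemma add_eq_zero_vec:
  fixes v w :: "'a::ab_group_add vec"
  assumes "v \<in> carrier_vec m" "w \<in> carrier_vec m" "v + w = 0\<^sub>v m"
  shows "v = - w"
proof (rule eq_vecI)
  fix i assume "i < dim_vec (- w)"
  then have i: "i < m" using assms by auto
  have "(v + w) $ i = (0\<^sub>v m :: 'a vec) $ i" by (simp only: assms(3))
  then have "(v + w) $ i = 0" using i by simp
  moreover have "v $ i + w $ i = (v + w) $ i" using assms(1,2) i by simp
  ultimately have "v $ i + w $ i = 0" by simp
  then show "v $ i = (- w) $ i" using assms i by (simp add: eq_neg_iff_add_eq_0)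
qed (use assms in auto)

lemma Delta_carrier[simp]: "Delta q i \<in> carrier_mat q q"
  by (simp add: Delta_def)

lemma index_Delta: "a < q \<Longrightarrow> b < q \<Longrightarrow> Delta q i $$ (a,b) = (if a = i \<and> b = i then 1 else 0)"
  by (simp add: Delta_def)

lemma dim_Delta[simp]: "dim_row (Delta q i) = q" "dim_col (Delta q i) = q"
  by (simp_all add: Delta_def)
theorem mainTheorem3:
  fixes N n q :: nat
    and A Bv G Bu C T :: "real mat"
    and Ms :: "nat \<Rightarrow> real mat"
    and u :: "real vec"
  assumes "N \<ge> 1" "n \<ge> 1" "q \<ge> 1"
    and A: "A \<in> carrier_mat n n" and Bv: "Bv \<in> carrier_mat n q"
    and G: "G \<in> carrier_mat q n" and Bu: "Bu \<in> carrier_mat n 1"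
    and C: "C \<in> carrier_mat 1 n"
    and Ms: "\<And>i. i < q \<Longrightarrow> Ms i \<in> carrier_mat N N"
    and T: "T \<in> carrier_mat N N" "invertible_mat T"
    and diag: "\<And>i. i < q \<Longrightarrow> diagonal_mat (mat_inv T * Ms i * T)"
    and u: "u \<in> carrier_vec N"
    and inv: "\<And>k. k < N \<Longrightarrow> invertible_mat
        (A + matsum n n q (\<lambda>i. ((mat_inv T * Ms i * T) $$ (k, k)) \<cdot>\<^sub>m (Bv * Delta q i * G)))"
  shows
    "(let M = matsum (N * q) (N * q) q (\<lambda>i. kron (Ms i) (Delta q i));
          Lam = (\<lambda>i. mat_inv T * Ms i * T);
          TI = kron T (1\<^sub>m q);
          Abar = kron (1\<^sub>m N) A + kron (1\<^sub>m N) Bv * M * kron (1\<^sub>m N) G;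
          Bbar = kron (1\<^sub>m N) Bu;
          Cbar = kron (1\<^sub>m N) C;
          S = diag_mat N (\<lambda>k. - (C * mat_inv (A + matsum n n q
                 (\<lambda>i. (Lam i $$ (k, k)) \<cdot>\<^sub>m (Bv * Delta q i * G))) * Bu) $$ (0, 0))
      in mat_inv TI * M * TI = matsum (N * q) (N * q) q (\<lambda>i. kron (Lam i) (Delta q i))
         \<and> diagonal_mat (mat_inv TI * M * TI)
         \<and> (\<exists>!x. x \<in> carrier_vec (N * n) \<and> Abar *\<^sub>v x + Bbar *\<^sub>v u = 0\<^sub>v (N * n))
         \<and> (\<forall>x. x \<in> carrier_vec (N * n) \<and> Abar *\<^sub>v x + Bbar *\<^sub>v u = 0\<^sub>v (N * n) \<longrightarrow>
              mat_inv T *\<^sub>v (Cbar *\<^sub>v x) = S *\<^sub>v (mat_inv T *\<^sub>v u)))"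
proof -
  define Ti where "Ti = mat_inv T"
  have Ti: "Ti \<in> carrier_mat N N" "T * Ti = 1\<^sub>m N" "Ti * T = 1\<^sub>m N"
    using mat_inv_props[OF T] by (auto simp: Ti_def)
  define Lam where "Lam = (\<lambda>i. Ti * Ms i * T)"
  have Lc: "Lam i \<in> carrier_mat N N" if "i < q" for i
    using Ms[OF that] Ti T by (auto simp: Lam_def)
  have Ld: "Lam i $$ (k,l) = 0" if "i < q" "k < N" "l < N" "k \<noteq> l" for i k l
  proof -
    have dg: "diagonal_mat (Lam i)" using diag[OF that(1)] by (simp add: Lam_def Ti_def)
    have dims: "dim_row (Lam i) = N" "dim_col (Lam i) = N" using Lc[OF that(1)] by auto
    show ?thesis using dg that dims unfolding diagonal_mat_def by metis
  qed
  define M where "M = matsum (N*q) (N*q) q (\<lambda>i. kron (Ms i) (Delta q i :: real mat))"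
  have Mc: "M \<in> carrier_mat (N*q) (N*q)" by (simp add: M_def)
  have q0: "q > 0" and n0: "n > 0" and N0: "N > 0" using assms(1-3) by auto
  have TIc: "kron T (1\<^sub>m q) \<in> carrier_mat (N*q) (N*q)" "kron Ti (1\<^sub>m q) \<in> carrier_mat (N*q) (N*q)"
    using T Ti by (auto intro!: kron_carrier)
  have TI1: "kron T (1\<^sub>m q) * kron Ti (1\<^sub>m q) = (1\<^sub>m (N*q) :: real mat)"
    using T Ti by (simp add: kron_mult[of _ N N _ q q _ N _ q] kron_one q0)
  have TI2: "kron Ti (1\<^sub>m q) * kron T (1\<^sub>m q) = (1\<^sub>m (N*q) :: real mat)"
    using T Ti by (simp add: kron_mult[of _ N N _ q q _ N _ q] kron_one q0)
  have TIinv: "mat_inv (kron T (1\<^sub>m q)) = kron Ti (1\<^sub>m q)"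
    by (rule mat_inv_eq[OF TIc TI1 TI2])
  define L where "L = matsum (N * q) (N * q) q (\<lambda>i. kron (Lam i) (Delta q i :: real mat))"
  have Lmc: "L \<in> carrier_mat (N*q) (N*q)" by (simp add: L_def)
  have P1: "kron Ti (1\<^sub>m q) * M * kron T (1\<^sub>m q) = L"
  proof -
    have "kron Ti (1\<^sub>m q) * M = matsum (N*q) (N*q) q (\<lambda>i. kron Ti (1\<^sub>m q) * kron (Ms i) (Delta q i))"
      unfolding M_def by (rule mult_matsum_left[OF TIc(2)]) (auto intro!: kron_carrier Ms)
    also have "\<dots> * kron T (1\<^sub>m q) = matsum (N*q) (N*q) q (\<lambda>i. kron Ti (1\<^sub>m q) * kron (Ms i) (Delta q i) * kron T (1\<^sub>m q))"
      by (rule matsum_mult_right[OF TIc(1)]) (auto intro!: mult_carrier_mat[OF TIc(2)] kron_carrier Ms)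
    also have "\<dots> = L" unfolding L_def
    proof (rule matsum_cong)
      fix i assume i: "i < q"
      have "kron Ti (1\<^sub>m q) * kron (Ms i) (Delta q i) = kron (Ti * Ms i) (1\<^sub>m q * Delta q i)"
        by (rule kron_mult[OF Ti(1) one_carrier_mat Ms[OF i] Delta_carrier q0])
      also have "\<dots> * kron T (1\<^sub>m q) = kron (Ti * Ms i * T) (1\<^sub>m q * Delta q i * 1\<^sub>m q)"
        by (rule kron_mult[OF mult_carrier_mat[OF Ti(1) Ms[OF i]] mult_carrier_mat[OF one_carrier_mat Delta_carrier] T(1) one_carrier_mat q0])
      finally show "kron Ti (1\<^sub>m q) * kron (Ms i) (Delta q i) * kron T (1\<^sub>m q) = kron (Lam i) (Delta q i)"
        by (simp add: Lam_def)
    qed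
    finally show ?thesis .
  qed
  have P2: "diagonal_mat L"
    unfolding diagonal_mat_def
  proof (intro allI impI)
    fix r c assume r: "r < dim_row L" and c: "c < dim_col L" and rc: "r \<noteq> c"
    then have r: "r < N*q" and c: "c < N*q" by (auto simp: L_def)
    have bd: "r div q < N" "c div q < N" "r mod q < q" "c mod q < q" using r c divmod_bounds by auto
    have "L $$ (r,c) = (\<Sum>i<q. kron (Lam i) (Delta q i) $$ (r,c))"
      unfolding L_def by (rule index_matsum[OF r c])
    also have "\<dots> = 0"
    proof (intro sum.neutral ballI)
      fix i assume "i \<in> {..<q}"
      then have i: "i < q" by simp
      have "kron (Lam i) (Delta q i) $$ (r,c) = Lam i $$ (r div q, c div q) * Delta q i $$ (r mod q, c mod q)"
        using Lc[OF i] r c by simp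
      also have "\<dots> = 0"
      proof (cases "r div q = c div q")
        case True
        then have "r mod q \<noteq> c mod q" using rc by (metis div_mult_mod_eq)
        then show ?thesis using bd by (simp add: index_Delta)
      next
        case False
        then show ?thesis using Ld[OF i bd(1,2) False] by simp
      qed
      finally show "kron (Lam i) (Delta q i) $$ (r,c) = 0" .
    qed
    finally show "L $$ (r,c) = 0" .
  qed
  define Dk where "Dk = (\<lambda>k. A + matsum n n q (\<lambda>i. (Lam i $$ (k,k)) \<cdot>\<^sub>m (Bv * Delta q i * G)))"
  have Dkc: "Dk k \<in> carrier_mat n n" for k using A by (simp add: Dk_def)
  have Dki: "invertible_mat (Dk k)" if "k < N" for k using inv[OF that] by (simp add: Dk_def Lam_def Ti_def)
  define Dinvk where "Dinvk = (\<lambda>k. mat_inv (Dk k))"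
  have Dinvk: "Dinvk k \<in> carrier_mat n n" "Dk k * Dinvk k = 1\<^sub>m n" "Dinvk k * Dk k = 1\<^sub>m n" if "k < N" for k
    using mat_inv_props[OF Dkc Dki[OF that]] by (auto simp: Dinvk_def)
  define D where "D = bdiag N n n Dk"
  define Dinv where "Dinv = bdiag N n n Dinvk"
  have Dc: "D \<in> carrier_mat (N*n) (N*n)" "Dinv \<in> carrier_mat (N*n) (N*n)" by (auto simp: D_def Dinv_def)
  have DD1: "D * Dinv = 1\<^sub>m (N*n)"
  proof -
    have "D * Dinv = bdiag N n n (\<lambda>k. Dk k * Dinvk k)" unfolding D_def Dinv_def
      by (rule bdiag_mult) (use Dkc Dinvk n0 in auto)
    also have "\<dots> = bdiag N n n (\<lambda>_. 1\<^sub>m n)" by (rule bdiag_cong) (use Dinvk in auto)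
    also have "\<dots> = 1\<^sub>m (N*n)" by (rule bdiag_one[OF n0])
    finally show ?thesis .
  qed
  have DD2: "Dinv * D = 1\<^sub>m (N*n)"
  proof -
    have "Dinv * D = bdiag N n n (\<lambda>k. Dinvk k * Dk k)" unfolding D_def Dinv_def
      by (rule bdiag_mult) (use Dkc Dinvk n0 in auto)
    also have "\<dots> = bdiag N n n (\<lambda>_. 1\<^sub>m n)" by (rule bdiag_cong) (use Dinvk in auto)
    also have "\<dots> = 1\<^sub>m (N*n)" by (rule bdiag_one[OF n0])
    finally show ?thesis .
  qed
  define P where "P = kron T (1\<^sub>m n :: real mat)"
  define Pi where "Pi = kron Ti (1\<^sub>m n :: real mat)"
  have Pc: "P \<in> carrier_mat (N*n) (N*n)" "Pi \<in> carrier_mat (N*n) (N*n)"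
    using T Ti by (auto simp: P_def Pi_def intro!: kron_carrier)
  have PP1: "P * Pi = 1\<^sub>m (N*n)"
    using T Ti by (simp add: P_def Pi_def kron_mult[of _ N N _ n n _ N _ n] kron_one n0)
  have PP2: "Pi * P = 1\<^sub>m (N*n)"
    using T Ti by (simp add: P_def Pi_def kron_mult[of _ N N _ n n _ N _ n] kron_one n0)
  define X where "X = kron (1\<^sub>m N) Bv"
  define Y where "Y = kron (1\<^sub>m N) G"
  define Abar where "Abar = kron (1\<^sub>m N) A + X * M * Y"
  have c1: "kron (1\<^sub>m N) A \<in> carrier_mat (N*n) (N*n)" "X \<in> carrier_mat (N*n) (N*q)" "Y \<in> carrier_mat (N*q) (N*n)"
    using A Bv G by (auto simp: X_def Y_def intro!: kron_carrier)
  have Abc: "Abar \<in> carrier_mat (N*n) (N*n)" using c1 Mc by (simp add: Abar_def)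
  have h1: "Pi * kron (1\<^sub>m N) A * P = kron (1\<^sub>m N) A"
  proof -
    have "Pi * kron (1\<^sub>m N) A = kron (Ti * 1\<^sub>m N) (1\<^sub>m n * A)" unfolding Pi_def
      by (rule kron_mult[OF Ti(1) one_carrier_mat one_carrier_mat A n0])
    also have "\<dots> * P = kron (Ti * 1\<^sub>m N * T) (1\<^sub>m n * A * 1\<^sub>m n)" unfolding P_def
      by (rule kron_mult[OF mult_carrier_mat[OF Ti(1) one_carrier_mat] mult_carrier_mat[OF one_carrier_mat A] T(1) one_carrier_mat n0])
    also have "\<dots> = kron (1\<^sub>m N) A" using Ti A by simp
    finally show ?thesis .
  qed
  have h2: "Pi * X = X * kron Ti (1\<^sub>m q)"
  proof -
    have "Pi * X = kron (Ti * 1\<^sub>m N) (1\<^sub>m n * Bv)" unfolding Pi_def X_def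
      by (rule kron_mult[OF Ti(1) one_carrier_mat one_carrier_mat Bv n0])
    also have "\<dots> = kron (1\<^sub>m N * Ti) (Bv * 1\<^sub>m q)" using Ti Bv by simp
    also have "\<dots> = X * kron Ti (1\<^sub>m q)" unfolding X_def
      by (rule kron_mult[OF one_carrier_mat Bv Ti(1) one_carrier_mat q0, symmetric])
    finally show ?thesis .
  qed
  have h3: "Y * P = kron T (1\<^sub>m q) * Y"
  proof -
    have "Y * P = kron (1\<^sub>m N * T) (G * 1\<^sub>m n)" unfolding P_def Y_def
      by (rule kron_mult[OF one_carrier_mat G T(1) one_carrier_mat n0])
    also have "\<dots> = kron (T * 1\<^sub>m N) (1\<^sub>m q * G)" using T G by simp
    also have "\<dots> = kron T (1\<^sub>m q) * Y" unfolding Y_def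
      by (rule kron_mult[OF T(1) one_carrier_mat one_carrier_mat G q0, symmetric])
    finally show ?thesis .
  qed
  have h4: "X * L * Y = matsum (N*n) (N*n) q (\<lambda>i. kron (Lam i) (Bv * Delta q i * G))"
  proof -
    have "X * L = matsum (N*n) (N*q) q (\<lambda>i. X * kron (Lam i) (Delta q i))"
      unfolding L_def by (rule mult_matsum_left[OF c1(2)]) (auto intro!: kron_carrier Lc)
    also have "\<dots> * Y = matsum (N*n) (N*n) q (\<lambda>i. X * kron (Lam i) (Delta q i) * Y)"
      by (rule matsum_mult_right[OF c1(3)]) (auto intro!: mult_carrier_mat[OF c1(2)] kron_carrier Lc)
    also have "\<dots> = matsum (N*n) (N*n) q (\<lambda>i. kron (Lam i) (Bv * Delta q i * G))"
    proof (rule matsum_cong)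
      fix i assume i: "i < q"
      have "X * kron (Lam i) (Delta q i) = kron (1\<^sub>m N * Lam i) (Bv * Delta q i)" unfolding X_def
        by (rule kron_mult[OF one_carrier_mat Bv Lc[OF i] Delta_carrier q0])
      also have "\<dots> * Y = kron (1\<^sub>m N * Lam i * 1\<^sub>m N) (Bv * Delta q i * G)" unfolding Y_def
        by (rule kron_mult[OF mult_carrier_mat[OF one_carrier_mat Lc[OF i]] mult_carrier_mat[OF Bv Delta_carrier] one_carrier_mat G q0])
      also have "\<dots> = kron (Lam i) (Bv * Delta q i * G)" using Lc[OF i] by simp
      finally show "X * kron (Lam i) (Delta q i) * Y = kron (Lam i) (Bv * Delta q i * G)" .
    qed
    finally show ?thesis .
  qed
  have h5: "kron (1\<^sub>m N) A + matsum (N*n) (N*n) q (\<lambda>i. kron (Lam i) (Bv * Delta q i * G)) = D"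
  proof (rule eq_matI)
    fix r c assume r: "r < dim_row D" and c: "c < dim_col D"
    then have r: "r < N*n" and c: "c < N*n" by (auto simp: D_def)
    have bd: "r div n < N" "c div n < N" "r mod n < n" "c mod n < n" using r c divmod_bounds by auto
    have BDG: "Bv * Delta q i * G \<in> carrier_mat n n" for i using mult_carrier_mat[OF mult_carrier_mat[OF Bv Delta_carrier] G] .
    have lhs: "(kron (1\<^sub>m N) A + matsum (N*n) (N*n) q (\<lambda>i. kron (Lam i) (Bv * Delta q i * G))) $$ (r,c)
       = 1\<^sub>m N $$ (r div n, c div n) * A $$ (r mod n, c mod n) +
         (\<Sum>i<q. Lam i $$ (r div n, c div n) * (Bv * Delta q i * G) $$ (r mod n, c mod n))"
    proof -
      have "matsum (N*n) (N*n) q (\<lambda>i. kron (Lam i) (Bv * Delta q i * G)) $$ (r,c) =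
         (\<Sum>i<q. Lam i $$ (r div n, c div n) * (Bv * Delta q i * G) $$ (r mod n, c mod n))"
        unfolding index_matsum[OF r c]
      proof (intro sum.cong refl)
        fix i assume "i \<in> {..<q}"
        then have i: "i < q" by simp
        show "kron (Lam i) (Bv * Delta q i * G) $$ (r,c) = Lam i $$ (r div n, c div n) * (Bv * Delta q i * G) $$ (r mod n, c mod n)"
          using Lc[OF i] BDG[of i] r c Bv G by (subst index_kron) auto
      qed
      moreover have "kron (1\<^sub>m N) A $$ (r,c) = 1\<^sub>m N $$ (r div n, c div n) * A $$ (r mod n, c mod n)"
        using A r c by (subst index_kron) auto
      ultimately show ?thesis using r c A by simp
    qed
    have rhs: "D $$ (r,c) = (if r div n = c div n then A $$ (r mod n, c mod n) +
         (\<Sum>i<q. Lam i $$ (r div n, r div n) * (Bv * Delta q i * G) $$ (r mod n, c mod n)) else 0)"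
      unfolding D_def index_bdiag[OF r c] Dk_def using bd A Bv G by (simp add: index_matsum)
    show "(kron (1\<^sub>m N) A + matsum (N*n) (N*n) q (\<lambda>i. kron (Lam i) (Bv * Delta q i * G))) $$ (r,c) = D $$ (r,c)"
    proof (cases "r div n = c div n")
      case True
      then show ?thesis unfolding lhs rhs using bd by simp
    next
      case False
      have "Lam i $$ (r div n, c div n) = 0" if "i < q" for i using Ld[OF that bd(1,2) False] .
      then show ?thesis unfolding lhs rhs using bd False by simp
    qed
  qed (use A in \<open>auto simp: D_def\<close>)
  have key: "Pi * Abar * P = D"
  proof -
    have XMY: "X * M * Y \<in> carrier_mat (N*n) (N*n)" using c1 Mc by simp
    have XM: "X * M \<in> carrier_mat (N*n) (N*q)" using c1 Mc by simp
    have YP: "Y * P \<in> carrier_mat (N*q) (N*n)" using c1 Pc by simp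
    have TM: "kron Ti (1\<^sub>m q) * M \<in> carrier_mat (N*q) (N*q)" using TIc Mc by simp
    have TIY: "kron T (1\<^sub>m q) * Y \<in> carrier_mat (N*q) (N*n)" using TIc c1 by simp
    have Q: "kron Ti (1\<^sub>m q) * M * kron T (1\<^sub>m q) \<in> carrier_mat (N*q) (N*q)" using TIc Mc by simp
    have e1: "Pi * (X * M * Y) * P = (Pi * X) * M * (Y * P)"
      by (simp only: assoc_mult_mat[OF Pc(2) XMY Pc(1)] assoc_mult_mat[OF XM c1(3) Pc(1)]
          assoc_mult_mat[OF Pc(2) XM YP, symmetric] assoc_mult_mat[OF Pc(2) c1(2) Mc, symmetric])
    have e2: "(Pi * X) * M * (Y * P) = X * (kron Ti (1\<^sub>m q) * M * kron T (1\<^sub>m q)) * Y"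
      unfolding h2 h3
      by (simp only: assoc_mult_mat[OF c1(2) TIc(2) Mc] assoc_mult_mat[OF c1(2) TM TIY]
          assoc_mult_mat[OF TM TIc(1) c1(3), symmetric] assoc_mult_mat[OF c1(2) Q c1(3), symmetric])
    have "Pi * Abar = Pi * kron (1\<^sub>m N) A + Pi * (X * M * Y)"
      unfolding Abar_def by (rule mult_add_distrib_mat[OF Pc(2) c1(1) XMY])
    then have "Pi * Abar * P = (Pi * kron (1\<^sub>m N) A + Pi * (X * M * Y)) * P" by simp
    also have "\<dots> = Pi * kron (1\<^sub>m N) A * P + Pi * (X * M * Y) * P"
      by (rule add_mult_distrib_mat[OF mult_carrier_mat[OF Pc(2) c1(1)] mult_carrier_mat[OF Pc(2) XMY] Pc(1)])
    also have "\<dots> = kron (1\<^sub>m N) A + X * L * Y" unfolding h1 e1 e2 P1 ..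
    also have "\<dots> = D" unfolding h4 h5 ..
    finally show ?thesis .
  qed
  have sq: "\<And>U V. U \<in> carrier_mat (N*n) (N*n) \<Longrightarrow> V \<in> carrier_mat (N*n) (N*n) \<Longrightarrow> U * V \<in> carrier_mat (N*n) (N*n)"
    by simp
  note asq = assoc_mult_mat[of _ "N*n" "N*n" _ "N*n" _ "N*n"]
  define Ainv where "Ainv = P * Dinv * Pi"
  have Aic: "Ainv \<in> carrier_mat (N*n) (N*n)" using Pc Dc by (simp add: Ainv_def)
  have Aeq: "Abar = P * D * Pi"
  proof -
    have "P * D * Pi = P * (Pi * Abar * P) * Pi" unfolding key ..
    also have "\<dots> = (P * Pi) * Abar * (P * Pi)" using Pc Abc by (simp add: asq sq)
    also have "\<dots> = Abar" using Abc by (simp add: PP1)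
    finally show ?thesis ..
  qed
  have AA1: "Abar * Ainv = 1\<^sub>m (N*n)"
  proof -
    have "Abar * Ainv = P * (D * (Pi * P) * Dinv) * Pi" unfolding Aeq Ainv_def using Pc Dc by (simp add: asq sq)
    also have "\<dots> = P * Pi" using Dc Pc by (simp add: PP2 DD1)
    finally show ?thesis using PP1 by simp
  qed
  have AA2: "Ainv * Abar = 1\<^sub>m (N*n)"
  proof -
    have "Ainv * Abar = P * (Dinv * (Pi * P) * D) * Pi" unfolding Aeq Ainv_def using Pc Dc by (simp add: asq sq)
    also have "\<dots> = P * Pi" using Dc Pc by (simp add: PP2 DD2)
    finally show ?thesis using PP1 by simp
  qed
  define K1 where "K1 = kron (1\<^sub>m N) C"
  define K2 where "K2 = kron (1\<^sub>m N) Bu"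
  have K1c: "K1 \<in> carrier_mat N (N*n)" using kron_carrier[OF one_carrier_mat C, of N] by (simp add: K1_def)
  have K2c: "K2 \<in> carrier_mat (N*n) N" using kron_carrier[OF one_carrier_mat Bu, of N] by (simp add: K2_def)
  have g1: "Ti * K1 * P = K1"
  proof -
    have "Ti * K1 = kron Ti (1\<^sub>m 1) * kron (1\<^sub>m N) C" by (simp only: kron_one1 K1_def)
    also have "\<dots> = kron (Ti * 1\<^sub>m N) (1\<^sub>m 1 * C)" by (rule kron_mult[OF Ti(1) one_carrier_mat one_carrier_mat C]) simp
    also have "\<dots> = kron Ti C" using Ti C by simp
    finally have "Ti * K1 * P = kron Ti C * kron T (1\<^sub>m n)" by (simp add: P_def)
    also have "\<dots> = kron (Ti * T) (C * 1\<^sub>m n)" by (rule kron_mult[OF Ti(1) C T(1) one_carrier_mat n0])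
    also have "\<dots> = K1" using Ti C by (simp add: K1_def)
    finally show ?thesis .
  qed
  have g2: "Pi * K2 = K2 * Ti"
  proof -
    have "Pi * K2 = kron (Ti * 1\<^sub>m N) (1\<^sub>m n * Bu)" unfolding Pi_def K2_def
      by (rule kron_mult[OF Ti(1) one_carrier_mat one_carrier_mat Bu n0])
    also have "\<dots> = kron (1\<^sub>m N * Ti) (Bu * 1\<^sub>m 1)" using Ti Bu by simp
    also have "\<dots> = K2 * kron Ti (1\<^sub>m 1)" unfolding K2_def
      by (rule kron_mult[OF one_carrier_mat Bu Ti(1) one_carrier_mat, symmetric]) simp
    also have "\<dots> = K2 * Ti" by (simp only: kron_one1)
    finally show ?thesis .
  qed
  define E where "E = bdiag N 1 1 (\<lambda>k. C * Dinvk k * Bu)"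
  have g3: "K1 * Dinv * K2 = E"
  proof -
    have "K1 * Dinv = bdiag N 1 n (\<lambda>_. C) * bdiag N n n Dinvk"
      unfolding K1_def Dinv_def by (subst kron_one_bdiag[OF C]) (use n0 in auto)
    also have "\<dots> = bdiag N 1 n (\<lambda>k. C * Dinvk k)" by (rule bdiag_mult) (use C Dinvk n0 in auto)
    finally have "K1 * Dinv * K2 = bdiag N 1 n (\<lambda>k. C * Dinvk k) * bdiag N n 1 (\<lambda>_. Bu)"
      unfolding K2_def by (subst kron_one_bdiag[OF Bu]) (use n0 in auto)
    also have "\<dots> = E" unfolding E_def by (rule bdiag_mult) (use C Dinvk Bu n0 in auto)
    finally show ?thesis .
  qed
  define S where "S = diag_mat N (\<lambda>k. - (C * mat_inv (Dk k) * Bu) $$ (0, 0))"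
  have SE: "S = - E"
  proof (rule eq_matI)
    fix i j assume i: "i < dim_row (- E)" and j: "j < dim_col (- E)"
    then have i: "i < N" and j: "j < N" by (auto simp: E_def)
    show "S $$ (i,j) = (- E) $$ (i,j)"
      using i j by (simp add: S_def E_def diag_mat_def index_bdiag Dinvk_def)
  qed (auto simp: S_def E_def diag_mat_def)
  have Ec: "E \<in> carrier_mat N N" using bdiag_carrier[of N 1 1 "\<lambda>k. C * Dinvk k * Bu"] by (simp add: E_def)
  have uc: "u \<in> carrier_vec N" by (rule u)
  define x0 where "x0 = Ainv *\<^sub>v (- (K2 *\<^sub>v u))"
  have K2u: "K2 *\<^sub>v u \<in> carrier_vec (N*n)" using K2c u by simp
  have x0c: "x0 \<in> carrier_vec (N*n)" using Aic K2u by (simp add: x0_def)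
  have Ax0: "Abar *\<^sub>v x0 = - (K2 *\<^sub>v u)"
    unfolding x0_def using assoc_mult_mat_vec[OF Abc Aic uminus_carrier_vec[THEN iffD2, OF K2u], symmetric] AA1 K2u by simp
  have sol: "x = x0" if x: "x \<in> carrier_vec (N*n)" "Abar *\<^sub>v x + K2 *\<^sub>v u = 0\<^sub>v (N*n)" for x
  proof -
    have Ax: "Abar *\<^sub>v x = - (K2 *\<^sub>v u)"
      by (rule add_eq_zero_vec[OF _ K2u x(2)]) (use Abc x in simp)
    have "x = (Ainv * Abar) *\<^sub>v x" using AA2 x by simp
    also have "\<dots> = Ainv *\<^sub>v (Abar *\<^sub>v x)" by (rule assoc_mult_mat_vec[OF Aic Abc x(1)])
    also have "\<dots> = x0" unfolding Ax x0_def ..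
    finally show ?thesis .
  qed
  have F3: "\<exists>!x. x \<in> carrier_vec (N*n) \<and> Abar *\<^sub>v x + K2 *\<^sub>v u = 0\<^sub>v (N*n)"
  proof (rule ex1I[of _ x0])
    show "x0 \<in> carrier_vec (N*n) \<and> Abar *\<^sub>v x0 + K2 *\<^sub>v u = 0\<^sub>v (N*n)"
      using x0c Ax0 K2u by simp
  qed (use sol in blast)
  have F4: "\<forall>x. x \<in> carrier_vec (N*n) \<and> Abar *\<^sub>v x + K2 *\<^sub>v u = 0\<^sub>v (N*n) \<longrightarrow>
      Ti *\<^sub>v (K1 *\<^sub>v x) = S *\<^sub>v (Ti *\<^sub>v u)"
  proof (intro allI impI)
    fix x assume "x \<in> carrier_vec (N*n) \<and> Abar *\<^sub>v x + K2 *\<^sub>v u = 0\<^sub>v (N*n)"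
    then have xx: "x = x0" using sol by blast
    define v1 where "v1 = Ti *\<^sub>v u"
    have v1c: "v1 \<in> carrier_vec N" using Ti u by (simp add: v1_def)
    have PiK2u: "Pi *\<^sub>v (K2 *\<^sub>v u) = K2 *\<^sub>v v1"
    proof -
      have "Pi *\<^sub>v (K2 *\<^sub>v u) = (Pi * K2) *\<^sub>v u" by (rule assoc_mult_mat_vec[OF Pc(2) K2c u, symmetric])
      also have "\<dots> = K2 *\<^sub>v v1" unfolding g2 v1_def by (rule assoc_mult_mat_vec[OF K2c Ti(1) u])
      finally show ?thesis .
    qed
    define z where "z = Dinv *\<^sub>v (K2 *\<^sub>v v1)"
    have K2v1: "K2 *\<^sub>v v1 \<in> carrier_vec (N*n)" using K2c v1c by simp
    have zc: "z \<in> carrier_vec (N*n)" using Dc K2v1 by (simp add: z_def)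
    have Ainvw: "Ainv *\<^sub>v (K2 *\<^sub>v u) = P *\<^sub>v z"
    proof -
      have PD: "P * Dinv \<in> carrier_mat (N*n) (N*n)" using Pc Dc by simp
      have "Ainv *\<^sub>v (K2 *\<^sub>v u) = (P * Dinv) *\<^sub>v (Pi *\<^sub>v (K2 *\<^sub>v u))"
        unfolding Ainv_def by (rule assoc_mult_mat_vec[OF PD Pc(2) K2u])
      also have "\<dots> = P *\<^sub>v (Dinv *\<^sub>v (Pi *\<^sub>v (K2 *\<^sub>v u)))"
        by (rule assoc_mult_mat_vec[OF Pc(1) Dc(2)]) (use Pc K2u in simp)
      finally show ?thesis unfolding PiK2u z_def .
    qed
    have "Ti *\<^sub>v (K1 *\<^sub>v x) = - (Ti *\<^sub>v (K1 *\<^sub>v (Ainv *\<^sub>v (K2 *\<^sub>v u))))"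
      unfolding xx x0_def
      using mult_uminus_vec_right[OF Aic K2u] mult_uminus_vec_right[OF K1c, of "Ainv *\<^sub>v (K2 *\<^sub>v u)"]
        mult_uminus_vec_right[OF Ti(1), of "K1 *\<^sub>v (Ainv *\<^sub>v (K2 *\<^sub>v u))"] Aic K2u K1c by simp
    also have "Ti *\<^sub>v (K1 *\<^sub>v (Ainv *\<^sub>v (K2 *\<^sub>v u))) = K1 *\<^sub>v z"
    proof -
      have TK: "Ti * K1 \<in> carrier_mat N (N*n)" using Ti K1c by simp
      have Pz: "P *\<^sub>v z \<in> carrier_vec (N*n)" using Pc zc by simp
      have "Ti *\<^sub>v (K1 *\<^sub>v (P *\<^sub>v z)) = (Ti * K1) *\<^sub>v (P *\<^sub>v z)" by (rule assoc_mult_mat_vec[OF Ti(1) K1c Pz, symmetric])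
      also have "\<dots> = (Ti * K1 * P) *\<^sub>v z" by (rule assoc_mult_mat_vec[OF TK Pc(1) zc, symmetric])
      finally show ?thesis unfolding Ainvw g1 .
    qed
    also have "K1 *\<^sub>v z = E *\<^sub>v v1"
    proof -
      have KD: "K1 * Dinv \<in> carrier_mat N (N*n)" using K1c Dc by simp
      have "K1 *\<^sub>v z = K1 *\<^sub>v (Dinv *\<^sub>v (K2 *\<^sub>v v1))" by (simp add: z_def)
      also have "\<dots> = (K1 * Dinv) *\<^sub>v (K2 *\<^sub>v v1)" by (rule assoc_mult_mat_vec[OF K1c Dc(2) K2v1, symmetric])
      also have "\<dots> = (K1 * Dinv * K2) *\<^sub>v v1" by (rule assoc_mult_mat_vec[OF KD K2c v1c, symmetric])
      finally show ?thesis unfolding g3 .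
    qed
    also have "- (E *\<^sub>v v1) = S *\<^sub>v (Ti *\<^sub>v u)" unfolding SE v1_def[symmetric] using Ec v1c by simp
    finally show "Ti *\<^sub>v (K1 *\<^sub>v x) = S *\<^sub>v (Ti *\<^sub>v u)" .
  qed
  have F1: "mat_inv (kron T (1\<^sub>m q)) * M * kron T (1\<^sub>m q) = L" unfolding TIinv by (rule P1)
  have F2: "diagonal_mat (mat_inv (kron T (1\<^sub>m q)) * M * kron T (1\<^sub>m q))" unfolding F1 by (rule P2)
  show ?thesis
    unfolding Let_def
    using F1 F2 F3 F4
    unfolding L_def Lam_def Ti_def M_def Abar_def X_def Y_def S_def Dk_def K1_def K2_def
    by blast
qed
end
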